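(* Fix $y\in\mathcal Y$, $g\in\mathcal G$ and $x\in\mathcal X$. Restrict attention to the individuals $i\in\mathcal I(xg)$, and assume the matrix $\hat{\mathbf P}=(\hat P_{ir})_{i\in\mathcal I(xg),r\in\mathcal R}$ has full column rank $|\mathcal R|$. Then the following two statements are equivalent. 1. The within-cell weighting estimator and the within-cell OLS estimator coincide: $\hat\mu^{(\mathrm{wtd})}(y\mid r)=\hat\mu^{(\mathrm{ols})}(y\mid r)$ for all $r\in\mathcal R$. 2. For every pair of distinct $j,k\in\mathcal R$, at least one of the following holds: - the probabilities perfectly discriminate between $j$ and $k$, i.e. for every $i\in\mathcal I(xg)$, $\hat P_{ij}>0$ implies $\hat P_{ik}=0$ (equivalently $\sum_{i\in\mathcal I(xg)}\hat P_{ij}\hat P_{ik}=0$); - $\hat\mu^{(\mathrm{wtd})}(y\mid j)=\hat\mu^{(\mathrm{wtd})}(y\mid k)$.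
   Context: There are observations $i$ with outcomes $Y_i\in\mathcal Y$ (a finite set), locations $G_i\in\mathcal G$ and covariates $X_i\in\mathcal X$. Each individual has a vector of race probabilities $(\hat P_{ir})_{r\in\mathcal R}$ (e.g., BISG probabilities) with $\hat P_{ir}\ge0$ and $\sum_{r}\hat P_{ir}=1$. Let $\mathcal I(xg)=\{i:X_i=x,G_i=g\}$ and let $\mathbf 1_y$ be the vector $(\mathbb 1\{Y_i=y\})_{i\in\mathcal I(xg)}$. Within the cell, the weighting estimator is $$\hat\mu^{(\mathrm{wtd})}(y\mid r)=\frac{\sum_{i\in\mathcal I(xg)}\mathbb 1\{Y_i=y\}\hat P_{ir}}{\sum_{i\in\mathcal I(xg)}\hat P_{ir}},$$ and the OLS estimator is the vector $$\hat{\boldsymbol\mu}^{(\mathrm{ols})}(y\mid\cdot)=(\hat{\mathbf P}^\top\hat{\mathbf P})^{-1}\hat{\mathbf P}^\top\mathbf 1_y\in\mathbb R^{\mathcal R}.$$ *)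

theory Defs
  imports "HOL-Analysis.Analysis"
begin

text \<open>Within a fixed cell (x,g): the individuals of the cell are the elements of the
finite type 'i, the races are the elements of the finite type 'r.  The matrix
P has rows indexed by individuals and columns by races: P $ i $ r = hat P_{ir}.\<close>

definition outcome_vec :: "('i::finite \<Rightarrow> 'y) \<Rightarrow> 'y \<Rightarrow> real ^ 'i" where
  "outcome_vec Y y = (\<chi> i. if Y i = y then 1 else 0)"

definition mu_wtd :: "real ^ 'r ^ 'i \<Rightarrow> ('i::finite \<Rightarrow> 'y) \<Rightarrow> 'y \<Rightarrow> 'r::finite \<Rightarrow> real" where
  "mu_wtd P Y y r =
     (\<Sum>i\<in>UNIV. (if Y i = y then 1 else 0) * P $ i $ r) / (\<Sum>i\<in>UNIV. P $ i $ r)"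

definition mu_ols :: "real ^ 'r ^ 'i \<Rightarrow> ('i::finite \<Rightarrow> 'y) \<Rightarrow> 'y \<Rightarrow> real ^ 'r::finite" where
  "mu_ols P Y y = matrix_inv (transpose P ** P) *v (transpose P *v outcome_vec Y y)"

end

theory Submission
  imports Defs
begin

lemma laplacian_zero:
  fixes G :: "'r::finite \<Rightarrow> 'r \<Rightarrow> real" and w :: "'r \<Rightarrow> real"
  assumes sym: "\<And>j k. G j k = G k j" and nn: "\<And>j k. G j k \<ge> 0"
    and F: "\<And>j. (\<Sum>k\<in>UNIV. G j k * (w k - w j)) = 0"
  shows "G j k * (w k - w j) = 0"
proof -
  have A: "(\<Sum>j\<in>UNIV. \<Sum>k\<in>UNIV. G j k * (w k - w j) * w k)
        = (\<Sum>j\<in>UNIV. \<Sum>k\<in>UNIV. G k j * (w j - w k) * w j)"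
    by (rule sum.swap)
  also have "\<dots> = - (\<Sum>j\<in>UNIV. w j * (\<Sum>k\<in>UNIV. G j k * (w k - w j)))"
    by (simp add: sum_distrib_left sum_negf[symmetric] sym algebra_simps)
  also have "\<dots> = 0" using F by simp
  finally have A0: "(\<Sum>j\<in>UNIV. \<Sum>k\<in>UNIV. G j k * (w k - w j) * w k) = 0" .
  have "(\<Sum>j\<in>UNIV. \<Sum>k\<in>UNIV. G j k * (w k - w j)^2)
      = (\<Sum>j\<in>UNIV. \<Sum>k\<in>UNIV. G j k * (w k - w j) * w k)
        - (\<Sum>j\<in>UNIV. w j * (\<Sum>k\<in>UNIV. G j k * (w k - w j)))"
    by (simp add: sum_distrib_left sum_subtractf[symmetric] power2_eq_square algebra_simps)
  also have "\<dots> = 0" using A0 F by simp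
  finally have S: "(\<Sum>j\<in>UNIV. \<Sum>k\<in>UNIV. G j k * (w k - w j)^2) = 0" .
  have nn2: "\<And>j k. G j k * (w k - w j)^2 \<ge> 0" using nn by simp
  have "(\<Sum>k\<in>UNIV. G j k * (w k - w j)^2) = 0"
    using S by (subst (asm) sum_nonneg_eq_0_iff) (auto intro: sum_nonneg nn2)
  hence "G j k * (w k - w j)^2 = 0"
    by (subst (asm) sum_nonneg_eq_0_iff) (auto intro: nn2)
  thus ?thesis by (simp add: power2_eq_square)
qed

theorem theorem4:
  fixes P :: "real ^ 'r::finite ^ 'i::finite"
    and Y :: "'i \<Rightarrow> 'y"
    and y :: 'y
  assumes nonneg: "\<And>i r. P $ i $ r \<ge> 0"
    and rowsum: "\<And>i. (\<Sum>r\<in>UNIV. P $ i $ r) = 1"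
    and fullrank: "rank P = CARD('r)"
  shows "(\<forall>r. mu_wtd P Y y r = mu_ols P Y y $ r) \<longleftrightarrow>
         (\<forall>j k. j \<noteq> k \<longrightarrow>
             ((\<forall>i. P $ i $ j > 0 \<longrightarrow> P $ i $ k = 0) \<or> mu_wtd P Y y j = mu_wtd P Y y k))"
proof -
  define G where "G = transpose P ** P"
  define s where "s r = (\<Sum>i\<in>UNIV. P $ i $ r)" for r
  define w where "w r = mu_wtd P Y y r" for r
  define b where "b = transpose P *v outcome_vec Y y"
  define W where "W = (\<chi> r. w r)"
  have Gjk: "G $ j $ k = (\<Sum>i\<in>UNIV. P $ i $ j * P $ i $ k)" for j k
    by (simp add: G_def matrix_matrix_mult_def transpose_def)
  have Gsym: "G $ j $ k = G $ k $ j" for j k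
    by (simp add: Gjk mult.commute)
  have Gnn: "G $ j $ k \<ge> 0" for j k
    unfolding Gjk by (intro sum_nonneg) (simp add: nonneg)
  have inj: "inj ((*v) P)" using fullrank full_rank_injective by blast
  have Pker: "P *v v = 0 \<Longrightarrow> v = 0" for v
    using inj by (metis injD matrix_vector_mult_0_right)
  have Ginj: "v = 0" if "G *v v = 0" for v
  proof -
    have "G *v v = transpose P *v (P *v v)"
      by (simp add: G_def matrix_vector_mul_assoc)
    hence "0 = (transpose P *v (P *v v)) \<bullet> v" using that by simp
    also have "\<dots> = (P *v v) \<bullet> (P *v v)" by (simp add: dot_lmul_matrix)
    finally have "P *v v = 0" by simp
    thus ?thesis by (rule Pker)
  qed
  have Ginv: "invertible G"
    unfolding invertible_left_inverse
    by (subst matrix_left_invertible_ker) (use Ginj in blast)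
  have MG: "matrix_inv G ** G = mat 1" "G ** matrix_inv G = mat 1"
    using Ginv unfolding invertible_def matrix_inv_def by (metis (mono_tags, lifting) someI_ex)+
  have spos: "s r > 0" for r
  proof -
    have "s r \<ge> 0" unfolding s_def by (intro sum_nonneg) (simp add: nonneg)
    moreover have "s r \<noteq> 0"
    proof
      assume "s r = 0"
      hence z: "P $ i $ r = 0" for i
        unfolding s_def using sum_nonneg_eq_0_iff[of UNIV "\<lambda>i. P $ i $ r"] nonneg by auto
      have "P *v axis r 1 = 0"
      proof -
        have "(P *v axis r 1) $ i = 0" for i
        proof -
          have "(P *v axis r 1) $ i = (\<Sum>j\<in>UNIV. P $ i $ j * axis r 1 $ j)"
            by (simp only: matrix_vector_mult_def vec_lambda_beta)
          also have "\<dots> = (\<Sum>j\<in>UNIV. if j = r then P $ i $ r else 0)"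
            by (rule sum.cong) (auto simp: axis_def)
          also have "\<dots> = 0" by (simp add: z)
          finally show ?thesis .
        qed
        thus ?thesis by (simp add: vec_eq_iff)
      qed
      hence "axis r (1::real) = 0" by (rule Pker)
      thus False by (simp add: axis_eq_0_iff)
    qed
    ultimately show ?thesis by simp
  qed
  have bw: "b $ r = w r * s r" for r
    using spos[of r]
    by (simp add: b_def w_def s_def mu_wtd_def outcome_vec_def matrix_vector_mult_def transpose_def
        mult.commute)
  have Grow: "(\<Sum>k\<in>UNIV. G $ j $ k) = s j" for j
  proof -
    have "(\<Sum>k\<in>UNIV. G $ j $ k) = (\<Sum>i\<in>UNIV. P $ i $ j * (\<Sum>k\<in>UNIV. P $ i $ k))"
      unfolding Gjk sum_distrib_left by (rule sum.swap)
    also have "\<dots> = s j" by (simp add: rowsum s_def)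
    finally show ?thesis .
  qed
  have Fdef: "(G *v W) $ j - b $ j = (\<Sum>k\<in>UNIV. G $ j $ k * (w k - w j))" for j
  proof -
    have "(G *v W) $ j = (\<Sum>k\<in>UNIV. G $ j $ k * w k)"
      by (simp add: matrix_vector_mult_def W_def)
    moreover have "b $ j = (\<Sum>k\<in>UNIV. G $ j $ k * w j)"
      by (simp add: bw Grow[symmetric] sum_distrib_left mult.commute)
    ultimately show ?thesis by (simp add: sum_subtractf[symmetric] algebra_simps)
  qed
  have olsW: "mu_ols P Y y = matrix_inv G *v b"
    by (simp add: mu_ols_def G_def b_def)
  have L: "(\<forall>r. mu_wtd P Y y r = mu_ols P Y y $ r) \<longleftrightarrow> (\<forall>j. (\<Sum>k\<in>UNIV. G $ j $ k * (w k - w j)) = 0)"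
  proof -
    have "(\<forall>r. mu_wtd P Y y r = mu_ols P Y y $ r) \<longleftrightarrow> W = matrix_inv G *v b"
      by (simp add: olsW vec_eq_iff W_def w_def)
    also have "\<dots> \<longleftrightarrow> G *v W = b"
    proof
      assume "W = matrix_inv G *v b"
      hence "G *v W = (G ** matrix_inv G) *v b" by (simp add: matrix_vector_mul_assoc)
      thus "G *v W = b" using MG(2) by simp
    next
      assume "G *v W = b"
      hence "matrix_inv G *v b = (matrix_inv G ** G) *v W" by (simp add: matrix_vector_mul_assoc[symmetric])
      thus "W = matrix_inv G *v b" using MG(1) by simp
    qed
    also have "\<dots> \<longleftrightarrow> (\<forall>j. (G *v W) $ j - b $ j = 0)"
      by (simp add: vec_eq_iff)
    finally show ?thesis by (simp add: Fdef)
  qed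
  have Gz: "G $ j $ k = 0 \<longleftrightarrow> (\<forall>i. P $ i $ j > 0 \<longrightarrow> P $ i $ k = 0)" for j k
  proof -
    have "G $ j $ k = 0 \<longleftrightarrow> (\<forall>i. P $ i $ j * P $ i $ k = 0)"
      unfolding Gjk by (subst sum_nonneg_eq_0_iff) (auto simp: nonneg)
    also have "\<dots> \<longleftrightarrow> (\<forall>i. P $ i $ j > 0 \<longrightarrow> P $ i $ k = 0)"
    proof -
      have "P $ i $ j * P $ i $ k = 0 \<longleftrightarrow> (P $ i $ j > 0 \<longrightarrow> P $ i $ k = 0)" for i
        using nonneg[of i j] by auto
      thus ?thesis by blast
    qed
    finally show ?thesis .
  qed
  have R: "(\<forall>j k. j \<noteq> k \<longrightarrow>
             ((\<forall>i. P $ i $ j > 0 \<longrightarrow> P $ i $ k = 0) \<or> mu_wtd P Y y j = mu_wtd P Y y k))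
         \<longleftrightarrow> (\<forall>j k. G $ j $ k * (w k - w j) = 0)"
    unfolding Gz[symmetric] w_def mult_eq_0_iff right_minus_eq by (metis (mono_tags))
  show ?thesis
    unfolding L R
  proof
    assume H: "\<forall>j. (\<Sum>k\<in>UNIV. G $ j $ k * (w k - w j)) = 0"
    show "\<forall>j k. G $ j $ k * (w k - w j) = 0"
    proof (intro allI)
      fix j k
      show "G $ j $ k * (w k - w j) = 0"
        by (rule laplacian_zero[of "\<lambda>j k. G $ j $ k" w]) (use H Gsym Gnn in auto)
    qed
  next
    assume "\<forall>j k. G $ j $ k * (w k - w j) = 0"
    hence A: "G $ j $ k * (w k - w j) = 0" for j k by blast
    show "\<forall>j. (\<Sum>k\<in>UNIV. G $ j $ k * (w k - w j)) = 0" by (simp only: A sum.neutral_const) simp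
  qed
qed

end
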